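(* Let $\phi:K\to[0,\infty)$ be a convex function attaining its minimum value at $0$, and assume $\phi$ is not constant. Then $\lim_{|x|\to\infty}\phi(x)=\infty$.
   Context: $K$ is a field complete with respect to a non-trivial non-archimedean absolute value, $B_K=\{x\in K:|x|\le1\}$. A function $\phi:K\to\mathbb R$ is convex if for all $n$, $x_1,\dots,x_n\in K$ and $\lambda_1,\dots,\lambda_n\in B_K$ with $\sum\lambda_i=1$ one has $\phi(\sum\lambda_ix_i)\le\max_i|\lambda_i|\phi(x_i)$. *)

theory Defs
  imports Main "HOL-Analysis.Analysis"
begin

definition nonarch_abs :: "('a::field \<Rightarrow> real) \<Rightarrow> bool" where
  "nonarch_abs v \<longleftrightarrow>
     (\<forall>x. 0 \<le> v x) \<and> (\<forall>x. v x = 0 \<longleftrightarrow> x = 0) \<and>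
     (\<forall>x y. v (x * y) = v x * v y) \<and>
     (\<forall>x y. v (x + y) \<le> max (v x) (v y))"

definition nontrivial_abs :: "('a::field \<Rightarrow> real) \<Rightarrow> bool" where
  "nontrivial_abs v \<longleftrightarrow> (\<exists>x. v x \<noteq> 0 \<and> v x \<noteq> 1)"

definition complete_abs :: "('a::field \<Rightarrow> real) \<Rightarrow> bool" where
  "complete_abs v \<longleftrightarrow>
     (\<forall>s::nat \<Rightarrow> 'a. (\<forall>e>0. \<exists>N. \<forall>m\<ge>N. \<forall>n\<ge>N. v (s m - s n) < e) \<longrightarrow>
        (\<exists>l. \<forall>e>0. \<exists>N. \<forall>n\<ge>N. v (s n - l) < e))"

definition na_convex :: "('a::field \<Rightarrow> real) \<Rightarrow> ('a \<Rightarrow> real) \<Rightarrow> bool" where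
  "na_convex v \<phi> \<longleftrightarrow>
     (\<forall>(n::nat) (x::nat \<Rightarrow> 'a) (l::nat \<Rightarrow> 'a).
        (\<forall>i<n. v (l i) \<le> 1) \<and> (\<Sum>i<n. l i) = 1 \<longrightarrow>
        \<phi> (\<Sum>i<n. l i * x i) \<le> (MAX i\<in>{..<n}. v (l i) * \<phi> (x i)))"

end

theory Submission
  imports Defs
begin

theorem mainTheorem9:
  fixes v :: "'a::field \<Rightarrow> real" and \<phi> :: "'a \<Rightarrow> real"
  assumes "nonarch_abs v" and "nontrivial_abs v" and "complete_abs v"
    and "na_convex v \<phi>"
    and "\<forall>x. 0 \<le> \<phi> x"
    and "\<forall>x. \<phi> 0 \<le> \<phi> x"
    and "\<exists>x y. \<phi> x \<noteq> \<phi> y"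
  shows "\<forall>M. \<exists>R. \<forall>x. v x > R \<longrightarrow> \<phi> x > M"
proof
  fix M :: real
  have nn: "\<And>x. 0 \<le> v x" and z: "\<And>x. v x = 0 \<longleftrightarrow> x = 0"
    and mul: "\<And>x y. v (x * y) = v x * v y" and ad: "\<And>x y. v (x + y) \<le> max (v x) (v y)"
    using assms(1) unfolding nonarch_abs_def by auto
  have v1: "v 1 = 1" using mul[of 1 1] z[of 1] by simp
  have vm1: "v (-1) = 1" using mul[of "-1" "-1"] nn[of "-1"] v1
    by (metis mult_minus1_right minus_minus mult_cancel_right1 mult_eq_0_iff
        order_antisym_conv z zero_neq_neg_one abs_of_nonneg real_sqrt_abs2 real_sqrt_one)
  have vneg: "v (- y) = v y" for y using mul[of "-1" y] vm1 by simp
  obtain a where pa: "\<phi> a > \<phi> 0"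
    using assms(6,7) by (metis order_less_le)
  have a0: "a \<noteq> 0" using pa by auto
  have va: "v a > 0" using a0 z nn by (metis order_less_le)
  have pap: "\<phi> a > 0" using pa assms(5) by (metis order_le_less_trans)
  have key: "\<phi> x \<ge> v x * \<phi> a / v a" if vx: "v x > v a" for x
  proof -
    have x0: "x \<noteq> 0" using vx nn z by (metis order_less_irrefl order_le_less_trans)
    define l where "l = a / x"
    have vl: "v l = v a / v x"
      using mul[of l x] x0 z unfolding l_def by (simp add: field_simps)
    have vl1: "v l \<le> 1" using vl vx va by simp
    have v1l: "v (1 - l) \<le> 1" using ad[of 1 "- l"] v1 vneg[of l] vl1 by simp
    define L where "L = (\<lambda>i::nat. if i = 0 then l else 1 - l)"
    define X where "X = (\<lambda>i::nat. if i = 0 then x else 0)"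
    have "\<phi> (\<Sum>i<2. L i * X i) \<le> (MAX i\<in>{..<2}. v (L i) * \<phi> (X i))"
    proof -
      have "\<forall>i<2. v (L i) \<le> 1" using vl1 v1l by (auto simp: L_def less_2_cases_iff)
      moreover have "(\<Sum>i<2. L i) = 1" by (simp add: L_def numeral_2_eq_2)
      ultimately show ?thesis using assms(4) unfolding na_convex_def by blast
    qed
    moreover have "(\<Sum>i<2. L i * X i) = a" using x0
      by (simp add: L_def X_def l_def numeral_2_eq_2)
    moreover have "{..<2::nat} = {0, 1}" by auto
    ultimately have "\<phi> a \<le> max (v l * \<phi> x) (v (1 - l) * \<phi> 0)"
      by (simp add: L_def X_def)
    moreover have "v (1 - l) * \<phi> 0 \<le> \<phi> 0"
      using v1l assms(5) by (simp add: mult_left_le_one_le nn)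
    ultimately have "\<phi> a \<le> v l * \<phi> x" using pa by linarith
    then show ?thesis using vl vx va by (simp add: field_simps)
  qed
  show "\<exists>R. \<forall>x. v x > R \<longrightarrow> \<phi> x > M"
  proof (intro exI allI impI)
    fix x assume h: "v x > max (v a) (M * v a / \<phi> a)"
    have "M < v x * \<phi> a / v a" using h va pap by (simp add: field_simps)
    then show "\<phi> x > M" using key[of x] h by linarith
  qed
qed

end
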